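(* Let $m\ge1$ and let $(b_0,\dots,b_d)$ be constants with $b_0\neq0$. If $\sum_{k=0}^d b_k\,M(\mathcal G(m,n+k))=0$ holds for all $n\ge1$, then it holds for all $n\in\mathbb Z$. Consequently, extending the sequence $(M(\mathcal G(m,n)))_{n\ge1}$ backwards by any linear recurrence with constant coefficients and nonzero constant coefficient that it satisfies yields exactly the values $M(\mathcal G(m,n))$, $n\le 0$.
   Context: Grid conventions: an $m$-by-$N$ grid has vertices $(i,j)$, $1\le i\le m$ (rows), $1\le j\le N$ (columns); horizontal edges join $(i,j),(i,j+1)$, vertical edges join $(i,j),(i+1,j)$. A signed graph is a graph each of whose edges carries a sign $+1$ or $-1$. For a signed graph $\mathcal G$, $M(\mathcal G)$ denotes the sum over all perfect matchings of $\mathcal G$ of the product of the signs of the edges in the matching. For $m\ge1$ and $n\ge 1$, $\mathcal G(m,n)$ is the $m$-by-$n$ grid graph with all edges of sign $+1$. For $n\le 0$, $\mathcal G(m,n)$ has the vertex set of the $m$-by-$(2-n)$ grid, all horizontal edges of that grid with sign $+1$, the vertical edges lying in columns $2,3,\dots,1-n$ with sign $-1$, and no vertical edges in columns $1$ and $2-n$. *)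

theory Defs
  imports Complex_Main
begin

text \<open>A signed graph is given by a vertex set V, an edge set E (edges are two-element
  vertex sets) and a sign function on edges.  A perfect matching is a set of edges
  covering each vertex exactly once.\<close>

definition perfect_matchings :: "'v set \<Rightarrow> 'v set set \<Rightarrow> 'v set set set" where
  "perfect_matchings V E = {P. P \<subseteq> E \<and> (\<forall>v\<in>V. \<exists>!e. e \<in> P \<and> v \<in> e)}"

definition Msigned :: "'v set \<Rightarrow> 'v set set \<Rightarrow> ('v set \<Rightarrow> int) \<Rightarrow> int" where
  "Msigned V E sg = (\<Sum>P\<in>perfect_matchings V E. \<Prod>e\<in>P. sg e)"

definition gcols :: "int \<Rightarrow> int" where
  "gcols n = (if n \<ge> 1 then n else 2 - n)"

definition gverts :: "nat \<Rightarrow> int \<Rightarrow> (int \<times> int) set" where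
  "gverts m n = {(i, j). 1 \<le> i \<and> i \<le> int m \<and> 1 \<le> j \<and> j \<le> gcols n}"

definition ghedges :: "nat \<Rightarrow> int \<Rightarrow> (int \<times> int) set set" where
  "ghedges m n = {{(i, j), (i, j + 1)} | i j.
      1 \<le> i \<and> i \<le> int m \<and> 1 \<le> j \<and> j + 1 \<le> gcols n}"

definition gvedges :: "nat \<Rightarrow> int \<Rightarrow> (int \<times> int) set set" where
  "gvedges m n = {{(i, j), (i + 1, j)} | i j.
      1 \<le> i \<and> i + 1 \<le> int m \<and>
      (if n \<ge> 1 then 1 \<le> j \<and> j \<le> n else 2 \<le> j \<and> j \<le> 1 - n)}"

definition gedges :: "nat \<Rightarrow> int \<Rightarrow> (int \<times> int) set set" where
  "gedges m n = ghedges m n \<union> gvedges m n"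

definition gsign :: "nat \<Rightarrow> int \<Rightarrow> (int \<times> int) set \<Rightarrow> int" where
  "gsign m n e = (if n \<le> 0 \<and> e \<in> gvedges m n then -1 else 1)"

definition MG :: "nat \<Rightarrow> int \<Rightarrow> int" where
  "MG m n = Msigned (gverts m n) (gedges m n) (gsign m n)"

end

theory Submission
  imports Defs
begin

lemma pm_finite: "finite E \<Longrightarrow> finite (perfect_matchings V E)"
  unfolding perfect_matchings_def by (rule finite_subset[of _ "Pow E"]) auto

lemma pm_sub: "P \<in> perfect_matchings V E \<Longrightarrow> P \<subseteq> E"
  unfolding perfect_matchings_def by blast

lemma pm_ex1: "P \<in> perfect_matchings V E \<Longrightarrow> w \<in> V \<Longrightarrow> \<exists>!x. x \<in> P \<and> w \<in> x"
  unfolding perfect_matchings_def by (drule CollectD, drule conjunct2, erule bspec)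

lemma pm_ex: "P \<in> perfect_matchings V E \<Longrightarrow> w \<in> V \<Longrightarrow> \<exists>x\<in>P. w \<in> x"
  by (drule (1) pm_ex1, erule ex1E, blast)

lemma pm_uniq: "P \<in> perfect_matchings V E \<Longrightarrow> w \<in> V \<Longrightarrow> x \<in> P \<Longrightarrow> y \<in> P \<Longrightarrow> w \<in> x \<Longrightarrow> w \<in> y \<Longrightarrow> x = y"
  by (drule (1) pm_ex1, erule ex1E, blast)

lemma pm_intro:
  assumes "P \<subseteq> E" "\<And>w. w \<in> V \<Longrightarrow> \<exists>x\<in>P. w \<in> x"
    "\<And>w x y. w \<in> V \<Longrightarrow> x \<in> P \<Longrightarrow> y \<in> P \<Longrightarrow> w \<in> x \<Longrightarrow> w \<in> y \<Longrightarrow> x = y"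
  shows "P \<in> perfect_matchings V E"
  unfolding perfect_matchings_def
proof (intro CollectI conjI ballI)
  show "P \<subseteq> E" by fact
  fix w assume w: "w \<in> V"
  from assms(2)[OF w] obtain x where "x \<in> P" "w \<in> x" by blast
  thus "\<exists>!e. e \<in> P \<and> w \<in> e" using assms(3)[OF w] by blast
qed

lemma Msigned_empty:
  assumes "\<forall>e\<in>E. e \<noteq> {} \<and> e \<subseteq> V" "V = {}"
  shows "Msigned V E sg = 1"
proof -
  have "E = {}" using assms by blast
  hence "perfect_matchings V E = {{}}" using assms unfolding perfect_matchings_def by auto
  thus ?thesis unfolding Msigned_def by simp
qed

lemma Msigned_expand:
  assumes fin: "finite E" and sub: "\<forall>e\<in>E. e \<subseteq> V" and v: "v \<in> V"
  shows "Msigned V E sg = (\<Sum>e\<in>{e\<in>E. v \<in> e}. sg e * Msigned (V - e) {e'\<in>E. e' \<inter> e = {}} sg)"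
proof -
  let ?pm = "perfect_matchings V E"
  let ?Ev = "{e\<in>E. v \<in> e}"
  have finpm: "finite ?pm" using fin by (rule pm_finite)
  have finEv: "finite ?Ev" using fin by simp
  have one: "(\<Sum>e\<in>?Ev. if e \<in> P then (\<Prod>x\<in>P. sg x) else 0) = (\<Prod>x\<in>P. sg x)" if P: "P \<in> ?pm" for P
  proof -
    from pm_ex[OF P v] obtain e0 where e0: "e0 \<in> P" "v \<in> e0" by blast
    have "e0 \<in> ?Ev" using pm_sub[OF P] e0 by blast
    have "(\<Sum>e\<in>?Ev. if e \<in> P then (\<Prod>x\<in>P. sg x) else 0) = (\<Sum>e\<in>?Ev. if e = e0 then (\<Prod>x\<in>P. sg x) else 0)"
    proof (rule sum.cong[OF refl])
      fix e assume "e \<in> ?Ev"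
      hence "e \<in> P \<longleftrightarrow> e = e0" using pm_uniq[OF P v, of e e0] e0 by blast
      thus "(if e \<in> P then (\<Prod>x\<in>P. sg x) else 0) = (if e = e0 then (\<Prod>x\<in>P. sg x) else 0)" by simp
    qed
    also have "\<dots> = (\<Prod>x\<in>P. sg x)" using \<open>e0 \<in> ?Ev\<close> finEv by (simp add: sum.delta')
    finally show ?thesis .
  qed
  have "Msigned V E sg = (\<Sum>P\<in>?pm. \<Sum>e\<in>?Ev. if e \<in> P then (\<Prod>x\<in>P. sg x) else 0)"
    unfolding Msigned_def using one by simp
  also have "\<dots> = (\<Sum>e\<in>?Ev. \<Sum>P\<in>?pm. if e \<in> P then (\<Prod>x\<in>P. sg x) else 0)"
    by (rule sum.swap)
  also have "\<dots> = (\<Sum>e\<in>?Ev. \<Sum>P\<in>{P\<in>?pm. e \<in> P}. (\<Prod>x\<in>P. sg x))"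
    using finpm by (simp add: sum.inter_filter)
  also have "\<dots> = (\<Sum>e\<in>?Ev. sg e * Msigned (V - e) {e'\<in>E. e' \<inter> e = {}} sg)"
  proof (rule sum.cong[OF refl])
    fix e assume e: "e \<in> ?Ev"
    have eV: "e \<subseteq> V" using e sub by auto
    let ?pm' = "perfect_matchings (V - e) {e'\<in>E. e' \<inter> e = {}}"
    have bij: "bij_betw (insert e) ?pm' {P\<in>?pm. e \<in> P}"
    proof (rule bij_betw_byWitness[where f'="\<lambda>P. P - {e}"])
      show "\<forall>P\<in>?pm'. insert e P - {e} = P"
      proof
        fix P assume "P \<in> ?pm'"
        hence "P \<subseteq> {e'\<in>E. e' \<inter> e = {}}" by (rule pm_sub)
        hence "e \<notin> P" using e by blast
        thus "insert e P - {e} = P" by simp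
      qed
      show "\<forall>P\<in>{P\<in>?pm. e \<in> P}. insert e (P - {e}) = P" by blast
      show "insert e ` ?pm' \<subseteq> {P\<in>?pm. e \<in> P}"
      proof
        fix Q assume "Q \<in> insert e ` ?pm'"
        then obtain P where P: "P \<in> ?pm'" and Q: "Q = insert e P" by blast
        have PE: "P \<subseteq> {e'\<in>E. e' \<inter> e = {}}" by (rule pm_sub[OF P])
        have "Q \<in> ?pm"
        proof (rule pm_intro)
          show "Q \<subseteq> E" using PE e Q by blast
          fix w assume w: "w \<in> V"
          show "\<exists>x\<in>Q. w \<in> x"
          proof (cases "w \<in> e")
            case True thus ?thesis using Q by blast
          next
            case False
            hence "w \<in> V - e" using w by simp
            from pm_ex[OF P this] show ?thesis using Q by blast
          qed
          fix x y assume xy: "x \<in> Q" "y \<in> Q" "w \<in> x" "w \<in> y"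
          show "x = y"
          proof (cases "w \<in> e")
            case True
            have "x = e"
            proof (rule ccontr)
              assume "x \<noteq> e" hence "x \<in> P" using xy Q by blast
              hence "x \<inter> e = {}" using PE by blast
              thus False using xy True by blast
            qed
            moreover have "y = e"
            proof (rule ccontr)
              assume "y \<noteq> e" hence "y \<in> P" using xy Q by blast
              hence "y \<inter> e = {}" using PE by blast
              thus False using xy True by blast
            qed
            ultimately show ?thesis by simp
          next
            case False
            hence "w \<in> V - e" using w by simp
            moreover have "x \<in> P" using xy(1,3) Q False by (cases "x = e") simp_all
            moreover have "y \<in> P" using xy(2,4) Q False by (cases "y = e") simp_all
            ultimately show ?thesis using pm_uniq[OF P] xy by blast
          qed
        qed
        thus "Q \<in> {P\<in>?pm. e \<in> P}" using Q by blast
      qed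
      show "(\<lambda>P. P - {e}) ` {P\<in>?pm. e \<in> P} \<subseteq> ?pm'"
      proof
        fix Q assume "Q \<in> (\<lambda>P. P - {e}) ` {P\<in>?pm. e \<in> P}"
        then obtain P where P: "P \<in> ?pm" "e \<in> P" and Q: "Q = P - {e}" by blast
        have disj: "x \<inter> e = {}" if x: "x \<in> Q" for x
        proof (rule ccontr)
          assume "x \<inter> e \<noteq> {}"
          then obtain w where "w \<in> x" "w \<in> e" by blast
          hence "x = e" using pm_uniq[OF P(1), of w x e] x Q P eV by blast
          thus False using x Q by blast
        qed
        show "Q \<in> ?pm'"
        proof (rule pm_intro)
          show "Q \<subseteq> {e'\<in>E. e' \<inter> e = {}}" using disj pm_sub[OF P(1)] Q by blast
          fix w assume w: "w \<in> V - e"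
          obtain x where x: "x \<in> P" "w \<in> x" using pm_ex[OF P(1)] w by blast
          have "x \<noteq> e" using x w by blast
          thus "\<exists>x\<in>Q. w \<in> x" using x Q by blast
          fix x y assume "x \<in> Q" "y \<in> Q" "w \<in> x" "w \<in> y"
          thus "x = y" using pm_uniq[OF P(1), of w x y] w Q by blast
        qed
      qed
    qed
    have "(\<Sum>P\<in>{P\<in>?pm. e \<in> P}. (\<Prod>x\<in>P. sg x)) = (\<Sum>P\<in>?pm'. (\<Prod>x\<in>insert e P. sg x))"
      using sum.reindex_bij_betw[OF bij, of "\<lambda>P. \<Prod>x\<in>P. sg x"] by simp
    also have "\<dots> = (\<Sum>P\<in>?pm'. sg e * (\<Prod>x\<in>P. sg x))"
    proof (rule sum.cong[OF refl])
      fix P assume P: "P \<in> ?pm'"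
      have PE: "P \<subseteq> {e'\<in>E. e' \<inter> e = {}}" by (rule pm_sub[OF P])
      hence "e \<notin> P" using e by blast
      moreover have "finite {e'\<in>E. e' \<inter> e = {}}" using fin by simp
      hence "finite P" using PE by (rule finite_subset[rotated])
      ultimately show "(\<Prod>x\<in>insert e P. sg x) = sg e * (\<Prod>x\<in>P. sg x)" by simp
    qed
    also have "\<dots> = sg e * Msigned (V - e) {e'\<in>E. e' \<inter> e = {}} sg"
      unfolding Msigned_def by (simp add: sum_distrib_left)
    finally show "(\<Sum>P\<in>{P\<in>?pm. e \<in> P}. (\<Prod>x\<in>P. sg x)) = sg e * Msigned (V - e) {e'\<in>E. e' \<inter> e = {}} sg" .
  qed
  finally show ?thesis .
qed

lemma Msigned_zero_ext:
  assumes "E \<subseteq> E'" "finite E'" "\<forall>e\<in>E. sg' e = sg e" "\<forall>e\<in>E' - E. sg' e = 0"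
  shows "Msigned V E' sg' = Msigned V E sg"
proof -
  have sub: "perfect_matchings V E \<subseteq> perfect_matchings V E'"
    using assms(1) unfolding perfect_matchings_def by auto
  have "Msigned V E' sg' = (\<Sum>P\<in>perfect_matchings V E. \<Prod>e\<in>P. sg' e)"
    unfolding Msigned_def
  proof (rule sum.mono_neutral_right)
    show "finite (perfect_matchings V E')" using assms(2) by (rule pm_finite)
    show "perfect_matchings V E \<subseteq> perfect_matchings V E'" by (rule sub)
    show "\<forall>P\<in>perfect_matchings V E' - perfect_matchings V E. (\<Prod>e\<in>P. sg' e) = 0"
    proof
      fix P assume P: "P \<in> perfect_matchings V E' - perfect_matchings V E"
      hence "\<not> P \<subseteq> E" "P \<subseteq> E'" unfolding perfect_matchings_def by auto
      then obtain e where "e \<in> P" "e \<in> E' - E" by auto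
      moreover have "finite P" using \<open>P \<subseteq> E'\<close> assms(2) by (rule finite_subset)
      ultimately show "(\<Prod>e\<in>P. sg' e) = 0" using assms(4) by (metis prod_zero)
    qed
  qed
  also have "\<dots> = Msigned V E sg" unfolding Msigned_def
    by (rule sum.cong[OF refl], rule prod.cong[OF refl]) (use assms(3) in \<open>auto simp: perfect_matchings_def\<close>)
  finally show ?thesis .
qed

definition Egrid :: "nat \<Rightarrow> (int \<times> int) set set" where
  "Egrid m = {{(i, j), (i, j + 1)} | i j. 1 \<le> i \<and> i \<le> int m}
           \<union> {{(i, j), (i + 1, j)} | i j. 1 \<le> i \<and> i + 1 \<le> int m}"

definition wt :: "(int \<Rightarrow> int) \<Rightarrow> (int \<times> int) set \<Rightarrow> int" where
  "wt \<sigma> e = (if card (snd ` e) = 1 then \<sigma> (Min (snd ` e)) else 1)"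

definition Phi :: "nat \<Rightarrow> (int \<Rightarrow> int) \<Rightarrow> (int \<times> int) set \<Rightarrow> int" where
  "Phi m \<sigma> V = Msigned V {e \<in> Egrid m. e \<subseteq> V} (wt \<sigma>)"

definition vt :: "nat \<Rightarrow> int \<Rightarrow> int set \<Rightarrow> int" where
  "vt m s W = Phi m (\<lambda>_. s) (W \<times> {0})"

lemma wt_h[simp]: "wt \<sigma> {(i, j), (i, j + 1)} = 1"
  unfolding wt_def by simp

lemma wt_v[simp]: "wt \<sigma> {(i, j), (i + 1, j)} = \<sigma> j"
  unfolding wt_def by simp

lemma Egrid_nonempty: "e \<in> Egrid m \<Longrightarrow> e \<noteq> {}"
  unfolding Egrid_def by auto

lemma Phi_empty[simp]: "Phi m \<sigma> {} = 1"
  unfolding Phi_def by (rule Msigned_empty) (auto dest: Egrid_nonempty)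

lemma Phi_expand:
  assumes "finite V" "v \<in> V"
  shows "Phi m \<sigma> V = (\<Sum>e\<in>{e \<in> Egrid m. e \<subseteq> V \<and> v \<in> e}. wt \<sigma> e * Phi m \<sigma> (V - e))"
proof -
  have fin: "finite {e \<in> Egrid m. e \<subseteq> V}"
    by (rule finite_subset[of _ "Pow V"]) (use assms(1) in auto)
  have "Phi m \<sigma> V = (\<Sum>e\<in>{e\<in>{e \<in> Egrid m. e \<subseteq> V}. v \<in> e}. wt \<sigma> e *
           Msigned (V - e) {e'\<in>{e \<in> Egrid m. e \<subseteq> V}. e' \<inter> e = {}} (wt \<sigma>))"
    unfolding Phi_def by (rule Msigned_expand[OF fin _ assms(2)]) auto
  also have "\<dots> = (\<Sum>e\<in>{e \<in> Egrid m. e \<subseteq> V \<and> v \<in> e}. wt \<sigma> e * Phi m \<sigma> (V - e))"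
  proof (rule sum.cong)
    show "{e\<in>{e \<in> Egrid m. e \<subseteq> V}. v \<in> e} = {e \<in> Egrid m. e \<subseteq> V \<and> v \<in> e}" by blast
    fix e
    have "{e'\<in>{e \<in> Egrid m. e \<subseteq> V}. e' \<inter> e = {}} = {e' \<in> Egrid m. e' \<subseteq> V - e}" by blast
    thus "wt \<sigma> e * Msigned (V - e) {e'\<in>{e \<in> Egrid m. e \<subseteq> V}. e' \<inter> e = {}} (wt \<sigma>) =
          wt \<sigma> e * Phi m \<sigma> (V - e)" unfolding Phi_def by simp
  qed
  finally show ?thesis .
qed

lemma rightmost_expand:
  assumes B: "finite B" "\<forall>p\<in>B. snd p < d"
    and S: "finite S" "S \<subseteq> {1..int m}" "S \<noteq> {}" and i: "i = Min S"
  shows "Phi m \<sigma> (B \<union> S \<times> {d}) =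
    (if (i, d - 1) \<in> B then Phi m \<sigma> ((B - {(i, d - 1)}) \<union> (S - {i}) \<times> {d}) else 0)
  + (if i + 1 \<in> S then \<sigma> d * Phi m \<sigma> (B \<union> (S - {i, i + 1}) \<times> {d}) else 0)"
proof -
  let ?V = "B \<union> S \<times> {d}"
  let ?eh = "{(i, d - 1), (i, d)}"
  let ?ev = "{(i, d), (i + 1, d)}"
  have iS: "i \<in> S" using S i by simp
  have imin: "\<And>x. x \<in> S \<Longrightarrow> i \<le> x" using S i by simp
  have iR: "1 \<le> i" "i \<le> int m" using iS S by auto
  have finV: "finite ?V" using B S by simp
  have vV: "(i, d) \<in> ?V" using iS by simp
  have Ev: "{e \<in> Egrid m. e \<subseteq> ?V \<and> (i, d) \<in> e} =
     (if (i, d - 1) \<in> B then {?eh} else {}) \<union> (if i + 1 \<in> S then {?ev} else {})"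
  proof (rule set_eqI, rule iffI)
    fix e assume e: "e \<in> {e \<in> Egrid m. e \<subseteq> ?V \<and> (i, d) \<in> e}"
    hence eE: "e \<in> Egrid m" and eV: "e \<subseteq> ?V" and ve: "(i, d) \<in> e" by auto
    from eE consider (h) a b where "e = {(a, b), (a, b + 1)}" | (v) a b where "e = {(a, b), (a + 1, b)}"
      unfolding Egrid_def by blast
    thus "e \<in> (if (i, d - 1) \<in> B then {?eh} else {}) \<union> (if i + 1 \<in> S then {?ev} else {})"
    proof cases
      case h
      show ?thesis
      proof (cases "(a, b) = (i, d)")
        case True
        hence "(i, d + 1) \<in> ?V" using eV h by auto
        thus ?thesis using B(2) by auto
      next
        case False
        hence ab: "a = i" "b = d - 1" using ve h by auto
        hence "(i, d - 1) \<in> ?V" using eV h by auto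
        hence "(i, d - 1) \<in> B" by auto
        thus ?thesis using h ab by auto
      qed
    next
      case v
      show ?thesis
      proof (cases "(a, b) = (i, d)")
        case True
        hence "(i + 1, d) \<in> ?V" using eV v by auto
        hence "i + 1 \<in> S" using B(2) by auto
        thus ?thesis using v True by auto
      next
        case False
        hence ab: "a = i - 1" "b = d" using ve v by auto
        hence "(i - 1, d) \<in> ?V" using eV v by auto
        hence "i - 1 \<in> S" using B(2) by auto
        thus ?thesis using imin by fastforce
      qed
    qed
  next
    fix e assume e: "e \<in> (if (i, d - 1) \<in> B then {?eh} else {}) \<union> (if i + 1 \<in> S then {?ev} else {})"
    show "e \<in> {e \<in> Egrid m. e \<subseteq> ?V \<and> (i, d) \<in> e}"
    proof (cases "e = ?eh")
      case True
      hence "(i, d - 1) \<in> B" using e by (auto split: if_splits simp: doubleton_eq_iff)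
      moreover have "?eh \<in> Egrid m"
      proof -
        have "{(i, d - 1), (i, d - 1 + 1)} \<in> Egrid m" unfolding Egrid_def using iR by blast
        thus ?thesis by simp
      qed
      ultimately show ?thesis using True iS by auto
    next
      case False
      hence "e = ?ev" "i + 1 \<in> S" using e by (auto split: if_splits)
      moreover have "i + 1 \<le> int m" using \<open>i + 1 \<in> S\<close> S by auto
      hence "?ev \<in> Egrid m" unfolding Egrid_def using iR by blast
      ultimately show ?thesis using iS by auto
    qed
  qed
  have neq: "?eh \<noteq> ?ev" by (auto simp: doubleton_eq_iff)
  have V1: "?V - ?eh = (B - {(i, d - 1)}) \<union> (S - {i}) \<times> {d}" using B(2) by auto
  have V2: "?V - ?ev = B \<union> (S - {i, i + 1}) \<times> {d}" using B(2) by auto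
  have wh: "wt \<sigma> ?eh = 1" using wt_h[of \<sigma> i "d - 1"] by simp
  have wv: "wt \<sigma> ?ev = \<sigma> d" by simp
  show ?thesis
    unfolding Phi_expand[OF finV vV] Ev using neq wh wv V1 V2 by auto
qed

lemma vt_empty[simp]: "vt m s {} = 1"
  unfolding vt_def by simp

lemma vt_expand:
  assumes "finite W" "W \<subseteq> {1..int m}" "W \<noteq> {}" "i = Min W"
  shows "vt m s W = (if i + 1 \<in> W then s * vt m s (W - {i, i + 1}) else 0)"
  using rightmost_expand[of "{}" 0 W m i "\<lambda>_. s"] assms unfolding vt_def by simp

lemma vt_zero: "finite W \<Longrightarrow> W \<subseteq> {1..int m} \<Longrightarrow> vt m 0 W = (if W = {} then 1 else 0)"
  using vt_expand[of W m "Min W" 0] by auto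

lemma Phi_col:
  assumes "finite W" "W \<subseteq> {1..int m}"
  shows "Phi m \<sigma> (W \<times> {c}) = vt m (\<sigma> c) W"
  using assms
proof (induction W rule: finite_psubset_induct)
  case (psubset W)
  show ?case
  proof (cases "W = {}")
    case True thus ?thesis by simp
  next
    case False
    let ?i = "Min W"
    have "Phi m \<sigma> (W \<times> {c}) = (if ?i + 1 \<in> W then \<sigma> c * Phi m \<sigma> ((W - {?i, ?i + 1}) \<times> {c}) else 0)"
      using rightmost_expand[of "{}" c W m ?i \<sigma>] psubset False by simp
    also have "\<dots> = (if ?i + 1 \<in> W then \<sigma> c * vt m (\<sigma> c) (W - {?i, ?i + 1}) else 0)"
    proof (cases "?i + 1 \<in> W")
      case True
      have "W - {?i, ?i + 1} \<subset> W" using True by auto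
      thus ?thesis using psubset by auto
    qed simp
    also have "\<dots> = vt m (\<sigma> c) W"
      using vt_expand[of W m ?i "\<sigma> c"] psubset False by simp
    finally show ?thesis .
  qed
qed

lemma sum_Pow_insert:
  assumes "finite A" "a \<notin> A"
  shows "(\<Sum>Y\<in>Pow (insert a A). f Y) = (\<Sum>Y\<in>Pow A. f Y) + (\<Sum>Y\<in>Pow A. f (insert a Y))"
proof -
  have inj: "inj_on (insert a) (Pow A)"
    unfolding inj_on_def
  proof (intro ballI impI)
    fix x y assume xy: "x \<in> Pow A" "y \<in> Pow A" "insert a x = insert a y"
    hence "insert a x - {a} = insert a y - {a}" by simp
    moreover have "a \<notin> x" "a \<notin> y" using xy assms(2) by auto
    ultimately show "x = y" by simp
  qed
  have "(\<Sum>Y\<in>Pow (insert a A). f Y) = (\<Sum>Y\<in>Pow A \<union> insert a ` Pow A. f Y)"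
    by (simp add: Pow_insert)
  also have "\<dots> = (\<Sum>Y\<in>Pow A. f Y) + (\<Sum>Y\<in>insert a ` Pow A. f Y)"
    by (rule sum.union_disjoint) (use assms in auto)
  also have "(\<Sum>Y\<in>insert a ` Pow A. f Y) = (\<Sum>Y\<in>Pow A. f (insert a Y))"
    using sum.reindex[OF inj] by simp
  finally show ?thesis .
qed

lemma sum_Pow_remove:
  assumes "finite A"
  shows "(\<Sum>Z\<in>Pow A. if a \<in> Z then 0 else g Z) = (\<Sum>Z\<in>Pow (A - {a}). g Z)"
proof (cases "a \<in> A")
  case True
  hence A: "A = insert a (A - {a})" by auto
  have "(\<Sum>Z\<in>Pow A. if a \<in> Z then 0 else g Z) =
     (\<Sum>Z\<in>Pow (A - {a}). if a \<in> Z then 0 else g Z) + (\<Sum>Z\<in>Pow (A - {a}). if a \<in> insert a Z then 0 else g (insert a Z))"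
    by (subst A, rule sum_Pow_insert) (use assms in auto)
  also have "\<dots> = (\<Sum>Z\<in>Pow (A - {a}). g Z)"
    by (auto intro!: sum.cong)
  finally show ?thesis .
next
  case False
  thus ?thesis by (auto intro!: sum.cong)
qed

lemma vt_conv:
  assumes "finite W" "W \<subseteq> {1..int m}"
  shows "(\<Sum>Y\<in>Pow W. vt m 1 Y * vt m (-1) (W - Y)) = (if W = {} then 1 else 0)"
proof (cases "W = {}")
  case True thus ?thesis by simp
next
  case False
  define i where "i = Min W"
  have iW: "i \<in> W" using assms False i_def by simp
  have imin: "\<And>x. x \<in> W \<Longrightarrow> i \<le> x" using assms i_def by simp
  define W' where "W' = W - {i}"
  have W: "W = insert i W'" "i \<notin> W'" "finite W'" using iW W'_def assms by auto
  have A: "(\<Sum>Y\<in>Pow W. vt m 1 Y * vt m (-1) (W - Y)) =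
      (\<Sum>Y\<in>Pow W'. vt m 1 Y * vt m (-1) (W - Y)) + (\<Sum>Y\<in>Pow W'. vt m 1 (insert i Y) * vt m (-1) (W - insert i Y))"
    by (subst (1) W(1), rule sum_Pow_insert[OF W(3) W(2)])
  have e1: "vt m (-1) (W - Y) = (if i + 1 \<in> W - Y then - vt m (-1) (W - Y - {i, i + 1}) else 0)"
    if Y: "Y \<in> Pow W'" for Y
  proof -
    have iY: "i \<notin> Y" using Y W(2) by blast
    have "i = Min (W - Y)" using iW iY imin
      by (intro Min_eqI[symmetric]) (use assms in auto)
    moreover have "finite (W - Y)" "W - Y \<subseteq> {1..int m}" "W - Y \<noteq> {}" using assms iW iY by auto
    ultimately show ?thesis using vt_expand[of "W - Y" m i "-1"] by simp
  qed
  have e2: "vt m 1 (insert i Y) = (if i + 1 \<in> Y then vt m 1 (Y - {i + 1}) else 0)"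
    if Y: "Y \<in> Pow W'" for Y
  proof -
    have YW: "Y \<subseteq> W" using Y W'_def by blast
    have iY: "i \<notin> Y" using Y W(2) by blast
    have fY: "finite Y" using YW assms(1) finite_subset by blast
    have "i = Min (insert i Y)" using YW imin fY
      by (intro Min_eqI[symmetric]) auto
    moreover have "finite (insert i Y)" "insert i Y \<subseteq> {1..int m}" "insert i Y \<noteq> {}"
      using fY YW iW assms by auto
    moreover have "insert i Y - {i, i + 1} = Y - {i + 1}" using iY by auto
    moreover have "(i + 1 \<in> insert i Y) = (i + 1 \<in> Y)" by simp
    ultimately show ?thesis using vt_expand[of "insert i Y" m i 1] by simp
  qed
  show ?thesis
  proof (cases "i + 1 \<in> W")
    case False
    have "(\<Sum>Y\<in>Pow W'. vt m 1 Y * vt m (-1) (W - Y)) = 0"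
      by (rule sum.neutral) (use e1 False in auto)
    moreover have "(\<Sum>Y\<in>Pow W'. vt m 1 (insert i Y) * vt m (-1) (W - insert i Y)) = 0"
      by (rule sum.neutral) (use e2 False W in auto)
    ultimately show ?thesis using A \<open>W \<noteq> {}\<close> by simp
  next
    case True
    define W'' where "W'' = W - {i, i + 1}"
    have W2: "W' = insert (i + 1) W''" "i + 1 \<notin> W''" "finite W''" "i \<notin> W''"
      using True W'_def W''_def assms by auto
    have s1: "(\<Sum>Y\<in>Pow W'. vt m 1 Y * vt m (-1) (W - Y)) =
        - (\<Sum>Y\<in>Pow W''. vt m 1 Y * vt m (-1) (W'' - Y))"
    proof -
      have "(\<Sum>Y\<in>Pow W'. vt m 1 Y * vt m (-1) (W - Y)) =
        (\<Sum>Y\<in>Pow W''. vt m 1 Y * vt m (-1) (W - Y)) + (\<Sum>Y\<in>Pow W''. vt m 1 (insert (i+1) Y) * vt m (-1) (W - insert (i+1) Y))"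
        by (subst (1) W2(1), rule sum_Pow_insert[OF W2(3) W2(2)])
      also have "(\<Sum>Y\<in>Pow W''. vt m 1 (insert (i+1) Y) * vt m (-1) (W - insert (i+1) Y)) = 0"
      proof (rule sum.neutral, rule ballI)
        fix Y assume "Y \<in> Pow W''"
        hence "insert (i+1) Y \<in> Pow W'" using W2 by auto
        thus "vt m 1 (insert (i+1) Y) * vt m (-1) (W - insert (i+1) Y) = 0" using e1 by auto
      qed
      also have "(\<Sum>Y\<in>Pow W''. vt m 1 Y * vt m (-1) (W - Y)) = (\<Sum>Y\<in>Pow W''. - (vt m 1 Y * vt m (-1) (W'' - Y)))"
      proof (rule sum.cong[OF refl])
        fix Y assume Y: "Y \<in> Pow W''"
        hence "Y \<in> Pow W'" using W2 by auto
        moreover have "i + 1 \<in> W - Y" "W - Y - {i, i + 1} = W'' - Y" using Y True W''_def by auto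
        ultimately show "vt m 1 Y * vt m (-1) (W - Y) = - (vt m 1 Y * vt m (-1) (W'' - Y))"
          using e1 by auto
      qed
      finally show ?thesis by (simp add: sum_negf)
    qed
    have s2: "(\<Sum>Y\<in>Pow W'. vt m 1 (insert i Y) * vt m (-1) (W - insert i Y)) =
        (\<Sum>Y\<in>Pow W''. vt m 1 Y * vt m (-1) (W'' - Y))"
    proof -
      have "(\<Sum>Y\<in>Pow W'. vt m 1 (insert i Y) * vt m (-1) (W - insert i Y)) =
        (\<Sum>Y\<in>Pow W''. vt m 1 (insert i Y) * vt m (-1) (W - insert i Y)) +
        (\<Sum>Y\<in>Pow W''. vt m 1 (insert i (insert (i+1) Y)) * vt m (-1) (W - insert i (insert (i+1) Y)))"
        by (subst (1) W2(1), rule sum_Pow_insert[OF W2(3) W2(2)])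
      also have "(\<Sum>Y\<in>Pow W''. vt m 1 (insert i Y) * vt m (-1) (W - insert i Y)) = 0"
      proof (rule sum.neutral, rule ballI)
        fix Y assume Y: "Y \<in> Pow W''"
        hence "Y \<in> Pow W'" "i + 1 \<notin> Y" using W2 by auto
        thus "vt m 1 (insert i Y) * vt m (-1) (W - insert i Y) = 0" using e2 by auto
      qed
      also have "(\<Sum>Y\<in>Pow W''. vt m 1 (insert i (insert (i+1) Y)) * vt m (-1) (W - insert i (insert (i+1) Y)))
          = (\<Sum>Y\<in>Pow W''. vt m 1 Y * vt m (-1) (W'' - Y))"
      proof (rule sum.cong[OF refl])
        fix Y assume Y: "Y \<in> Pow W''"
        hence "insert (i+1) Y \<in> Pow W'" using W2 by auto
        moreover have "insert (i+1) Y - {i + 1} = Y" "W - insert i (insert (i+1) Y) = W'' - Y"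
          using Y W2 W''_def by auto
        ultimately show "vt m 1 (insert i (insert (i+1) Y)) * vt m (-1) (W - insert i (insert (i+1) Y))
          = vt m 1 Y * vt m (-1) (W'' - Y)" using e2 by auto
      qed
      finally show ?thesis by simp
    qed
    show ?thesis using A s1 s2 \<open>W \<noteq> {}\<close> by simp
  qed
qed

lemma peel:
  assumes B0: "finite B0" "\<forall>p\<in>B0. snd p < c" and X0: "finite X0"
    and S: "finite S" "S \<subseteq> {1..int m}"
  shows "Phi m \<sigma> (B0 \<union> X0 \<times> {c} \<union> S \<times> {c + 1}) =
    (\<Sum>Z\<in>Pow (S \<inter> X0). Phi m \<sigma> (B0 \<union> (X0 - Z) \<times> {c}) * vt m (\<sigma> (c + 1)) (S - Z))"
  using S X0
proof (induction S arbitrary: X0 rule: finite_psubset_induct)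
  case (psubset S X0)
  show ?case
  proof (cases "S = {}")
    case True thus ?thesis by simp
  next
    case False
    define i where "i = Min S"
    have iS: "i \<in> S" using psubset False i_def by simp
    have imin: "\<And>x. x \<in> S \<Longrightarrow> i \<le> x" using psubset i_def by simp
    let ?B = "B0 \<union> X0 \<times> {c}"
    let ?f = "\<lambda>Z. Phi m \<sigma> (B0 \<union> (X0 - Z) \<times> {c}) * vt m (\<sigma> (c + 1)) (S - Z)"
    have Bfin: "finite ?B" using B0 psubset by simp
    have Bsnd: "\<forall>p\<in>?B. snd p < c + 1" using B0 by auto
    have inB: "(i, c + 1 - 1) \<in> ?B \<longleftrightarrow> i \<in> X0" using B0(2) by auto
    have Bm: "?B - {(i, c + 1 - 1)} = B0 \<union> (X0 - {i}) \<times> {c}" using B0(2) by auto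
    have rexp: "Phi m \<sigma> (?B \<union> S \<times> {c + 1}) =
      (if i \<in> X0 then Phi m \<sigma> (B0 \<union> (X0 - {i}) \<times> {c} \<union> (S - {i}) \<times> {c + 1}) else 0)
    + (if i + 1 \<in> S then \<sigma> (c + 1) * Phi m \<sigma> (?B \<union> (S - {i, i + 1}) \<times> {c + 1}) else 0)"
      using rightmost_expand[OF Bfin Bsnd psubset(1,3) False i_def, of \<sigma>] inB Bm by simp
    define A' where "A' = (S \<inter> X0) - {i}"
    have A'fin: "finite A'" using psubset A'_def by simp
    have RHS: "(\<Sum>Z\<in>Pow (S \<inter> X0). ?f Z) = (\<Sum>Z\<in>Pow A'. ?f Z) + (if i \<in> X0 then (\<Sum>Z\<in>Pow A'. ?f (insert i Z)) else 0)"
    proof (cases "i \<in> X0")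
      case True
      hence "S \<inter> X0 = insert i A'" using iS A'_def by auto
      thus ?thesis using sum_Pow_insert[OF A'fin, of i ?f] True A'_def by simp
    next
      case False
      hence "S \<inter> X0 = A'" using A'_def by auto
      thus ?thesis using False by simp
    qed
    have partA: "(\<Sum>Z\<in>Pow A'. ?f (insert i Z)) = Phi m \<sigma> (B0 \<union> (X0 - {i}) \<times> {c} \<union> (S - {i}) \<times> {c + 1})"
    proof -
      have "S - {i} \<subset> S" using iS by auto
      hence IH: "Phi m \<sigma> (B0 \<union> (X0 - {i}) \<times> {c} \<union> (S - {i}) \<times> {c + 1}) =
         (\<Sum>Z\<in>Pow ((S - {i}) \<inter> (X0 - {i})). Phi m \<sigma> (B0 \<union> (X0 - {i} - Z) \<times> {c}) * vt m (\<sigma> (c + 1)) (S - {i} - Z))"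
        using psubset by auto
      have "(S - {i}) \<inter> (X0 - {i}) = A'" using A'_def by auto
      hence "Phi m \<sigma> (B0 \<union> (X0 - {i}) \<times> {c} \<union> (S - {i}) \<times> {c + 1}) =
         (\<Sum>Z\<in>Pow A'. Phi m \<sigma> (B0 \<union> (X0 - {i} - Z) \<times> {c}) * vt m (\<sigma> (c + 1)) (S - {i} - Z))"
        using IH by simp
      also have "\<dots> = (\<Sum>Z\<in>Pow A'. ?f (insert i Z))"
      proof (rule sum.cong[OF refl])
        fix Z
        have d: "X0 - {i} - Z = X0 - insert i Z" "S - {i} - Z = S - insert i Z" by blast+
        show "Phi m \<sigma> (B0 \<union> (X0 - {i} - Z) \<times> {c}) * vt m (\<sigma> (c + 1)) (S - {i} - Z) = ?f (insert i Z)"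
          by (simp only: d)
      qed
      finally show ?thesis by (rule sym)
    qed
    have partB: "(\<Sum>Z\<in>Pow A'. ?f Z) = (if i + 1 \<in> S then \<sigma> (c + 1) * Phi m \<sigma> (?B \<union> (S - {i, i + 1}) \<times> {c + 1}) else 0)"
    proof -
      have vexp: "vt m (\<sigma> (c + 1)) (S - Z) = (if i + 1 \<in> S - Z then \<sigma> (c + 1) * vt m (\<sigma> (c + 1)) (S - {i, i + 1} - Z) else 0)"
        if Z: "Z \<in> Pow A'" for Z
      proof -
        have iSZ: "i \<in> S - Z" using Z iS A'_def by auto
        have "i = Min (S - Z)" using iSZ imin
          by (intro Min_eqI[symmetric]) (use psubset in auto)
        moreover have "S - Z - {i, i + 1} = S - {i, i + 1} - Z" by auto
        moreover have "finite (S - Z)" "S - Z \<subseteq> {1..int m}" "S - Z \<noteq> {}" using psubset iSZ by auto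
        ultimately show ?thesis using vt_expand[of "S - Z" m i "\<sigma> (c + 1)"] by simp
      qed
      show ?thesis
      proof (cases "i + 1 \<in> S")
        case False
        have "(\<Sum>Z\<in>Pow A'. ?f Z) = 0" by (rule sum.neutral) (use vexp False in auto)
        thus ?thesis using False by simp
      next
        case True
        have "S - {i, i + 1} \<subset> S" using iS by auto
        hence IH: "Phi m \<sigma> (?B \<union> (S - {i, i + 1}) \<times> {c + 1}) =
           (\<Sum>Z\<in>Pow ((S - {i, i + 1}) \<inter> X0). Phi m \<sigma> (B0 \<union> (X0 - Z) \<times> {c}) * vt m (\<sigma> (c + 1)) (S - {i, i + 1} - Z))"
          using psubset by auto
        have "(\<Sum>Z\<in>Pow A'. ?f Z) = (\<Sum>Z\<in>Pow A'. if i + 1 \<in> Z then 0 else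
              \<sigma> (c + 1) * (Phi m \<sigma> (B0 \<union> (X0 - Z) \<times> {c}) * vt m (\<sigma> (c + 1)) (S - {i, i + 1} - Z)))"
          by (rule sum.cong[OF refl]) (use vexp True in auto)
        also have "\<dots> = (\<Sum>Z\<in>Pow (A' - {i + 1}). \<sigma> (c + 1) * (Phi m \<sigma> (B0 \<union> (X0 - Z) \<times> {c}) * vt m (\<sigma> (c + 1)) (S - {i, i + 1} - Z)))"
          by (rule sum_Pow_remove[OF A'fin])
        also have "A' - {i + 1} = (S - {i, i + 1}) \<inter> X0" using A'_def by auto
        finally show ?thesis using IH True by (simp add: sum_distrib_left)
      qed
    qed
    show ?thesis using rexp RHS partA partB by simp
  qed
qed

definition sig :: "int \<Rightarrow> int \<Rightarrow> int" where
  "sig n j = (if n \<ge> 1 then 1 else if 2 \<le> j \<and> j \<le> 1 - n then -1 else 0)"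

lemma gverts_eq: "gverts m n = {1..int m} \<times> {1..gcols n}"
  unfolding gverts_def by auto

lemma MG_Phi: "MG m n = Phi m (sig n) ({1..int m} \<times> {1..gcols n})"
proof -
  let ?V = "{1..int m} \<times> {1..gcols n}"
  let ?E = "{e \<in> Egrid m. e \<subseteq> ?V}"
  have gc: "gcols n = (if n \<ge> 1 then n else 2 - n)" by (simp add: gcols_def)
  have sub: "gedges m n \<subseteq> ?E"
  proof
    fix e assume "e \<in> gedges m n"
    hence "e \<in> ghedges m n \<or> e \<in> gvedges m n" unfolding gedges_def by auto
    thus "e \<in> ?E"
    proof
      assume "e \<in> ghedges m n"
      then obtain i j where e: "e = {(i, j), (i, j + 1)}" "1 \<le> i" "i \<le> int m" "1 \<le> j" "j + 1 \<le> gcols n"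
        unfolding ghedges_def by blast
      have "e \<in> Egrid m" unfolding Egrid_def using e by blast
      thus ?thesis using e by auto
    next
      assume "e \<in> gvedges m n"
      then obtain i j where e: "e = {(i, j), (i + 1, j)}" "1 \<le> i" "i + 1 \<le> int m"
        "(if n \<ge> 1 then 1 \<le> j \<and> j \<le> n else 2 \<le> j \<and> j \<le> 1 - n)"
        unfolding gvedges_def by blast
      have "e \<in> Egrid m" unfolding Egrid_def using e by blast
      moreover have "1 \<le> j" "j \<le> gcols n" using e(4) gc by (auto split: if_splits)
      ultimately show ?thesis using e by auto
    qed
  qed
  have fin: "finite ?E" by (rule finite_subset[of _ "Pow ?V"]) auto
  have w1: "wt (sig n) e = gsign m n e" if e: "e \<in> gedges m n" for e
  proof -
    from e have "e \<in> ghedges m n \<or> e \<in> gvedges m n" unfolding gedges_def by auto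
    thus ?thesis
    proof
      assume "e \<in> ghedges m n"
      then obtain i j where e: "e = {(i, j), (i, j + 1)}"
        unfolding ghedges_def by blast
      have "e \<notin> gvedges m n"
      proof
        assume "e \<in> gvedges m n"
        then obtain a b where "e = {(a, b), (a + 1, b)}" unfolding gvedges_def by blast
        thus False using e by (auto simp: doubleton_eq_iff)
      qed
      thus ?thesis using e by (simp add: gsign_def)
    next
      assume ev: "e \<in> gvedges m n"
      then obtain i j where e: "e = {(i, j), (i + 1, j)}"
        "(if n \<ge> 1 then 1 \<le> j \<and> j \<le> n else 2 \<le> j \<and> j \<le> 1 - n)"
        unfolding gvedges_def by blast
      show ?thesis using e ev by (auto simp: gsign_def sig_def split: if_splits)
    qed
  qed
  have w0: "wt (sig n) e = 0" if e: "e \<in> ?E - gedges m n" for e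
  proof -
    from e have eE: "e \<in> Egrid m" "e \<subseteq> ?V" "e \<notin> ghedges m n" "e \<notin> gvedges m n"
      unfolding gedges_def by auto
    from eE(1) consider (h) i j where "e = {(i, j), (i, j + 1)}" "1 \<le> i" "i \<le> int m"
      | (v) i j where "e = {(i, j), (i + 1, j)}" "1 \<le> i" "i + 1 \<le> int m"
      unfolding Egrid_def by blast
    thus ?thesis
    proof cases
      case h
      hence "1 \<le> j" "j + 1 \<le> gcols n" using eE(2) by auto
      hence "e \<in> ghedges m n" unfolding ghedges_def using h by blast
      thus ?thesis using eE by simp
    next
      case v
      hence j: "1 \<le> j" "j \<le> gcols n" using eE(2) by auto
      show ?thesis
      proof (cases "(if n \<ge> 1 then 1 \<le> j \<and> j \<le> n else 2 \<le> j \<and> j \<le> 1 - n)")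
        case True
        hence "e \<in> gvedges m n" unfolding gvedges_def using v by blast
        thus ?thesis using eE by simp
      next
        case False
        thus ?thesis using v j gc by (auto simp: sig_def split: if_splits)
      qed
    qed
  qed
  have "Phi m (sig n) ?V = Msigned ?V (gedges m n) (gsign m n)"
    unfolding Phi_def by (rule Msigned_zero_ext[OF sub fin]) (use w1 w0 in auto)
  thus ?thesis unfolding MG_def gverts_eq by simp
qed

definition Tp :: "nat \<Rightarrow> (int set \<Rightarrow> complex) \<Rightarrow> int set \<Rightarrow> complex" where
  "Tp m f S = (if S \<subseteq> {1..int m} then
     (\<Sum>Z\<in>Pow S. f ({1..int m} - Z) * of_int (vt m 1 (S - Z))) else 0)"

definition Ti :: "nat \<Rightarrow> (int set \<Rightarrow> complex) \<Rightarrow> int set \<Rightarrow> complex" where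
  "Ti m f S = (if S \<subseteq> {1..int m} then
     (\<Sum>Z\<in>Pow ({1..int m} - S). f Z * of_int (vt m (-1) ({1..int m} - S - Z))) else 0)"

definition dR :: "nat \<Rightarrow> int set \<Rightarrow> complex" where
  "dR m X = (if X = {1..int m} then 1 else 0)"

lemma pos_formula:
  "\<forall>X. X \<subseteq> {1..int m} \<longrightarrow>
     of_int (Phi m (\<lambda>_. 1) ({1..int m} \<times> {1..int k} \<union> X \<times> {int k + 1})) = (Tp m ^^ Suc k) (dR m) X"
proof (induction k)
  case 0
  show ?case
  proof (intro allI impI)
    fix X :: "int set" assume X: "X \<subseteq> {1..int m}"
    have fX: "finite X" using X finite_subset by blast
    have "(Tp m ^^ Suc 0) (dR m) X = (\<Sum>Z\<in>Pow X. dR m ({1..int m} - Z) * of_int (vt m 1 (X - Z)))"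
      using X by (simp add: Tp_def)
    also have "\<dots> = (\<Sum>Z\<in>Pow X. if Z = {} then of_int (vt m 1 X) else 0)"
    proof (rule sum.cong[OF refl])
      fix Z assume "Z \<in> Pow X"
      hence "({1..int m} - Z = {1..int m}) \<longleftrightarrow> Z = {}" using X by auto
      thus "dR m ({1..int m} - Z) * of_int (vt m 1 (X - Z)) = (if Z = {} then of_int (vt m 1 X) else 0)"
        by (auto simp: dR_def)
    qed
    also have "\<dots> = of_int (vt m 1 X)" using fX by (simp add: sum.delta)
    finally show "of_int (Phi m (\<lambda>_. 1) ({1..int m} \<times> {1..int 0} \<union> X \<times> {int 0 + 1})) = (Tp m ^^ Suc 0) (dR m) X"
      using Phi_col[OF fX X, of "\<lambda>_. 1" 1] by simp
  qed
next
  case (Suc k)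
  show ?case
  proof (intro allI impI)
    fix X :: "int set" assume X: "X \<subseteq> {1..int m}"
    have fX: "finite X" using X finite_subset by blast
    have set: "{1..int m} \<times> {1..int (Suc k)} \<union> X \<times> {int (Suc k) + 1} =
      {1..int m} \<times> {1..int k} \<union> {1..int m} \<times> {int k + 1} \<union> X \<times> {int k + 1 + 1}" by auto
    have "Phi m (\<lambda>_. 1) ({1..int m} \<times> {1..int (Suc k)} \<union> X \<times> {int (Suc k) + 1}) =
      (\<Sum>Z\<in>Pow (X \<inter> {1..int m}). Phi m (\<lambda>_. 1) ({1..int m} \<times> {1..int k} \<union> ({1..int m} - Z) \<times> {int k + 1}) * vt m 1 (X - Z))"
      unfolding set using peel[of "{1..int m} \<times> {1..int k}" "int k + 1" "{1..int m}" X m "\<lambda>_. 1"] fX X by auto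
    also have "X \<inter> {1..int m} = X" using X by auto
    finally have eq: "of_int (Phi m (\<lambda>_. 1) ({1..int m} \<times> {1..int (Suc k)} \<union> X \<times> {int (Suc k) + 1})) =
      (\<Sum>Z\<in>Pow X. of_int (Phi m (\<lambda>_. 1) ({1..int m} \<times> {1..int k} \<union> ({1..int m} - Z) \<times> {int k + 1})) * (of_int (vt m 1 (X - Z)) :: complex))"
      by simp
    also have "\<dots> = (\<Sum>Z\<in>Pow X. (Tp m ^^ Suc k) (dR m) ({1..int m} - Z) * of_int (vt m 1 (X - Z)))"
      using Suc.IH by (intro sum.cong[OF refl]) auto
    also have "\<dots> = (Tp m ^^ Suc (Suc k)) (dR m) X" using X by (simp add: Tp_def)
    finally show "of_int (Phi m (\<lambda>_. 1) ({1..int m} \<times> {1..int (Suc k)} \<union> X \<times> {int (Suc k) + 1})) = (Tp m ^^ Suc (Suc k)) (dR m) X" .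
  qed
qed

lemma MG_pos:
  assumes "n \<ge> 1"
  shows "of_int (MG m n) = (Tp m ^^ nat n) (dR m) {1..int m}"
proof -
  define k where "k = nat n - 1"
  have n: "n = int k + 1" "nat n = Suc k" using assms k_def by auto
  have "sig n = (\<lambda>_. 1)" using assms by (auto simp: sig_def)
  moreover have "gcols n = n" using assms by (simp add: gcols_def)
  moreover have "{1..int m} \<times> {1..n} = {1..int m} \<times> {1..int k} \<union> {1..int m} \<times> {int k + 1}"
    using n by auto
  ultimately show ?thesis using pos_formula[of m k] n by (simp add: MG_Phi)
qed

lemma neg_formula:
  "j \<le> k \<Longrightarrow> \<forall>X. X \<subseteq> {1..int m} \<longrightarrow>
     of_int (Phi m (sig (- int k)) ({1..int m} \<times> {1..int j} \<union> X \<times> {int j + 1})) = (Ti m ^^ j) (dR m) ({1..int m} - X)"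
proof (induction j)
  case 0
  show ?case
  proof (intro allI impI)
    fix X :: "int set" assume X: "X \<subseteq> {1..int m}"
    have fX: "finite X" using X finite_subset by blast
    have s1: "sig (- int k) 1 = 0" by (simp add: sig_def)
    have "Phi m (sig (- int k)) (X \<times> {1}) = vt m 0 X" using Phi_col[OF fX X, of "sig (- int k)" 1] s1 by simp
    also have "\<dots> = (if X = {} then 1 else 0)" by (rule vt_zero[OF fX X])
    finally show "of_int (Phi m (sig (- int k)) ({1..int m} \<times> {1..int 0} \<union> X \<times> {int 0 + 1})) = (Ti m ^^ 0) (dR m) ({1..int m} - X)"
      using X by (auto simp: dR_def)
  qed
next
  case (Suc j)
  hence jk: "Suc j \<le> k" by simp
  show ?case
  proof (intro allI impI)
    fix X :: "int set" assume X: "X \<subseteq> {1..int m}"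
    have fX: "finite X" using X finite_subset by blast
    have set: "{1..int m} \<times> {1..int (Suc j)} \<union> X \<times> {int (Suc j) + 1} =
      {1..int m} \<times> {1..int j} \<union> {1..int m} \<times> {int j + 1} \<union> X \<times> {int j + 1 + 1}" by auto
    have sg: "sig (- int k) (int j + 1 + 1) = -1" using jk by (simp add: sig_def)
    have "Phi m (sig (- int k)) ({1..int m} \<times> {1..int (Suc j)} \<union> X \<times> {int (Suc j) + 1}) =
      (\<Sum>Z\<in>Pow (X \<inter> {1..int m}). Phi m (sig (- int k)) ({1..int m} \<times> {1..int j} \<union> ({1..int m} - Z) \<times> {int j + 1}) * vt m (-1) (X - Z))"
      unfolding set using peel[of "{1..int m} \<times> {1..int j}" "int j + 1" "{1..int m}" X m "sig (- int k)"] fX X sg by auto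
    also have "X \<inter> {1..int m} = X" using X by auto
    finally have "of_int (Phi m (sig (- int k)) ({1..int m} \<times> {1..int (Suc j)} \<union> X \<times> {int (Suc j) + 1})) =
      (\<Sum>Z\<in>Pow X. of_int (Phi m (sig (- int k)) ({1..int m} \<times> {1..int j} \<union> ({1..int m} - Z) \<times> {int j + 1})) * (of_int (vt m (-1) (X - Z)) :: complex))"
      by simp
    also have "\<dots> = (\<Sum>Z\<in>Pow X. (Ti m ^^ j) (dR m) Z * of_int (vt m (-1) (X - Z)))"
    proof (rule sum.cong[OF refl])
      fix Z assume Z: "Z \<in> Pow X"
      hence "{1..int m} - ({1..int m} - Z) = Z" using X by auto
      moreover have "{1..int m} - Z \<subseteq> {1..int m}" by auto
      ultimately show "of_int (Phi m (sig (- int k)) ({1..int m} \<times> {1..int j} \<union> ({1..int m} - Z) \<times> {int j + 1})) * (of_int (vt m (-1) (X - Z)) :: complex)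
        = (Ti m ^^ j) (dR m) Z * of_int (vt m (-1) (X - Z))"
        using Suc.IH jk by auto
    qed
    also have "\<dots> = (Ti m ^^ Suc j) (dR m) ({1..int m} - X)"
    proof -
      have "{1..int m} - ({1..int m} - X) = X" using X by auto
      thus ?thesis by (simp add: Ti_def)
    qed
    finally show "of_int (Phi m (sig (- int k)) ({1..int m} \<times> {1..int (Suc j)} \<union> X \<times> {int (Suc j) + 1})) = (Ti m ^^ Suc j) (dR m) ({1..int m} - X)" .
  qed
qed

lemma MG_neg:
  assumes "n \<le> 0"
  shows "of_int (MG m n) = (Ti m ^^ nat (- n)) (dR m) {1..int m}"
proof -
  define k where "k = nat (- n)"
  have n: "n = - int k" using assms k_def by auto
  have gc: "gcols n = int k + 2" using assms n by (simp add: gcols_def)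
  have set: "{1..int m} \<times> {1..gcols n} = {1..int m} \<times> {1..int k} \<union> {1..int m} \<times> {int k + 1} \<union> {1..int m} \<times> {int k + 1 + 1}"
    unfolding gc by auto
  have sg: "sig n (int k + 1 + 1) = 0" using n by (simp add: sig_def)
  have "MG m n = (\<Sum>Z\<in>Pow ({1..int m} \<inter> {1..int m}). Phi m (sig n) ({1..int m} \<times> {1..int k} \<union> ({1..int m} - Z) \<times> {int k + 1}) * vt m 0 ({1..int m} - Z))"
    unfolding MG_Phi set using peel[of "{1..int m} \<times> {1..int k}" "int k + 1" "{1..int m}" "{1..int m}" m "sig n"] sg by auto
  also have "\<dots> = (\<Sum>Z\<in>Pow {1..int m}. if Z = {1..int m} then Phi m (sig n) ({1..int m} \<times> {1..int k} \<union> ({1..int m} - Z) \<times> {int k + 1}) else 0)"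
  proof (rule sum.cong)
    fix Z assume Z: "Z \<in> Pow {1..int m}"
    have "vt m 0 ({1..int m} - Z) = (if {1..int m} - Z = {} then 1 else 0)" by (rule vt_zero) auto
    moreover have "({1..int m} - Z = {}) \<longleftrightarrow> Z = {1..int m}" using Z by auto
    ultimately show "Phi m (sig n) ({1..int m} \<times> {1..int k} \<union> ({1..int m} - Z) \<times> {int k + 1}) * vt m 0 ({1..int m} - Z) =
      (if Z = {1..int m} then Phi m (sig n) ({1..int m} \<times> {1..int k} \<union> ({1..int m} - Z) \<times> {int k + 1}) else 0)" by simp
  qed simp
  also have "\<dots> = Phi m (sig n) ({1..int m} \<times> {1..int k} \<union> {} \<times> {int k + 1})" by (simp add: sum.delta)
  finally have "of_int (MG m n) = (of_int (Phi m (sig (- int k)) ({1..int m} \<times> {1..int k} \<union> {} \<times> {int k + 1})) :: complex)"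
    using n by simp
  also have "\<dots> = (Ti m ^^ k) (dR m) ({1..int m} - {})" using neg_formula[of k k m] by blast
  finally show ?thesis using k_def by simp
qed

lemma Pow_swap:
  assumes "finite A"
  shows "(\<Sum>Z\<in>Pow A. \<Sum>Z'\<in>Pow Z. g Z' Z) = (\<Sum>Z'\<in>Pow A. \<Sum>Y\<in>Pow (A - Z'). g Z' (Z' \<union> Y))"
proof -
  have "(\<Sum>Z\<in>Pow A. \<Sum>Z'\<in>Pow Z. g Z' Z) = (\<Sum>Z\<in>Pow A. \<Sum>Z'\<in>{Z'\<in>Pow A. Z' \<subseteq> Z}. g Z' Z)"
    by (rule sum.cong[OF refl]) (rule sum.cong, auto)
  also have "\<dots> = (\<Sum>Z'\<in>Pow A. \<Sum>Z\<in>{Z\<in>Pow A. Z' \<subseteq> Z}. g Z' Z)"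
    by (rule sum.swap_restrict) (use assms in auto)
  also have "\<dots> = (\<Sum>Z'\<in>Pow A. \<Sum>Y\<in>Pow (A - Z'). g Z' (Z' \<union> Y))"
  proof (rule sum.cong[OF refl])
    fix Z' assume Z': "Z' \<in> Pow A"
    have inj: "inj_on (\<lambda>Y. Z' \<union> Y) (Pow (A - Z'))" unfolding inj_on_def by blast
    have im: "(\<lambda>Y. Z' \<union> Y) ` Pow (A - Z') = {Z\<in>Pow A. Z' \<subseteq> Z}"
    proof (rule set_eqI, rule iffI)
      fix Z assume "Z \<in> {Z\<in>Pow A. Z' \<subseteq> Z}"
      hence "Z = Z' \<union> (Z - Z')" "Z - Z' \<in> Pow (A - Z')" by auto
      thus "Z \<in> (\<lambda>Y. Z' \<union> Y) ` Pow (A - Z')" by blast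
    qed (use Z' in auto)
    show "(\<Sum>Z\<in>{Z\<in>Pow A. Z' \<subseteq> Z}. g Z' Z) = (\<Sum>Y\<in>Pow (A - Z'). g Z' (Z' \<union> Y))"
      unfolding im[symmetric] by (rule sum.reindex[OF inj, unfolded comp_def])
  qed
  finally show ?thesis .
qed

lemma Ti_Tp:
  assumes supp: "\<forall>S. \<not> S \<subseteq> {1..int m} \<longrightarrow> f S = 0"
  shows "Ti m (Tp m f) = f"
proof
  fix S
  show "Ti m (Tp m f) S = f S"
  proof (cases "S \<subseteq> {1..int m}")
    case False thus ?thesis using supp by (simp add: Ti_def)
  next
    case True
    define A where "A = {1..int m} - S"
    have fA: "finite A" using A_def by simp
    have AR: "A \<subseteq> {1..int m}" using A_def by auto
    have "Ti m (Tp m f) S = (\<Sum>Z\<in>Pow A. Tp m f Z * of_int (vt m (-1) (A - Z)))"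
      using True by (simp add: Ti_def A_def)
    also have "\<dots> = (\<Sum>Z\<in>Pow A. \<Sum>Z'\<in>Pow Z. f ({1..int m} - Z') * of_int (vt m 1 (Z - Z')) * of_int (vt m (-1) (A - Z)))"
    proof (rule sum.cong[OF refl])
      fix Z assume "Z \<in> Pow A"
      hence "Z \<subseteq> {1..int m}" using AR by auto
      thus "Tp m f Z * of_int (vt m (-1) (A - Z)) = (\<Sum>Z'\<in>Pow Z. f ({1..int m} - Z') * of_int (vt m 1 (Z - Z')) * of_int (vt m (-1) (A - Z)))"
        by (simp add: Tp_def sum_distrib_right)
    qed
    also have "\<dots> = (\<Sum>Z'\<in>Pow A. \<Sum>Y\<in>Pow (A - Z'). f ({1..int m} - Z') * of_int (vt m 1 ((Z' \<union> Y) - Z')) * of_int (vt m (-1) (A - (Z' \<union> Y))))"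
      by (rule Pow_swap[OF fA])
    also have "\<dots> = (\<Sum>Z'\<in>Pow A. f ({1..int m} - Z') * of_int (\<Sum>Y\<in>Pow (A - Z'). vt m 1 Y * vt m (-1) ((A - Z') - Y)))"
    proof (rule sum.cong[OF refl])
      fix Z' assume Z': "Z' \<in> Pow A"
      have "\<And>Y. Y \<in> Pow (A - Z') \<Longrightarrow> (Z' \<union> Y) - Z' = Y \<and> A - (Z' \<union> Y) = (A - Z') - Y" by auto
      thus "(\<Sum>Y\<in>Pow (A - Z'). f ({1..int m} - Z') * of_int (vt m 1 ((Z' \<union> Y) - Z')) * of_int (vt m (-1) (A - (Z' \<union> Y)))) =
        f ({1..int m} - Z') * of_int (\<Sum>Y\<in>Pow (A - Z'). vt m 1 Y * vt m (-1) ((A - Z') - Y))"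
        by (simp add: sum_distrib_left mult.assoc)
    qed
    also have "\<dots> = (\<Sum>Z'\<in>Pow A. if Z' = A then f ({1..int m} - Z') else 0)"
    proof (rule sum.cong[OF refl])
      fix Z' assume Z': "Z' \<in> Pow A"
      have "(\<Sum>Y\<in>Pow (A - Z'). vt m 1 Y * vt m (-1) ((A - Z') - Y)) = (if A - Z' = {} then 1 else 0)"
        by (rule vt_conv) (use fA AR in auto)
      moreover have "(A - Z' = {}) \<longleftrightarrow> Z' = A" using Z' by auto
      ultimately show "f ({1..int m} - Z') * of_int (\<Sum>Y\<in>Pow (A - Z'). vt m 1 Y * vt m (-1) ((A - Z') - Y)) =
        (if Z' = A then f ({1..int m} - Z') else 0)" by simp
    qed
    also have "\<dots> = f ({1..int m} - A)" using fA by (simp add: sum.delta)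
    also have "{1..int m} - A = S" using True A_def by auto
    finally show ?thesis .
  qed
qed

lemma dep:
  fixes v :: "'i \<Rightarrow> 'a \<Rightarrow> complex"
  assumes "finite A" "finite I" "card A < card I" "\<forall>i\<in>I. \<forall>S. S \<notin> A \<longrightarrow> v i S = 0"
  shows "\<exists>c. (\<exists>i\<in>I. c i \<noteq> 0) \<and> (\<forall>S. (\<Sum>i\<in>I. c i * v i S) = 0)"
  using assms
proof (induction A arbitrary: I v rule: finite_induct)
  case empty
  then obtain i0 where i0: "i0 \<in> I" by fastforce
  show ?case
  proof (intro exI conjI allI)
    show "\<exists>i\<in>I. (if i = i0 then 1 else 0 :: complex) \<noteq> 0" using i0 by auto
    fix S
    show "(\<Sum>i\<in>I. (if i = i0 then 1 else 0) * v i S) = 0"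
      using empty i0 by simp
  qed
next
  case (insert a A)
  show ?case
  proof (cases "\<forall>i\<in>I. v i a = 0")
    case True
    have "\<forall>i\<in>I. \<forall>S. S \<notin> A \<longrightarrow> v i S = 0"
    proof (intro ballI allI impI)
      fix i S assume "i \<in> I" "S \<notin> A"
      thus "v i S = 0" using True insert.prems(3) by (cases "S = a") auto
    qed
    moreover have "card A < card I" using insert by simp
    ultimately show ?thesis using insert.IH insert.prems by blast
  next
    case False
    then obtain p where p: "p \<in> I" "v p a \<noteq> 0" by blast
    define I' where "I' = I - {p}"
    define w where "w i S = v i S - (v i a / v p a) * v p S" for i S
    have fI': "finite I'" using insert I'_def by simp
    have cI': "card A < card I'" using insert p I'_def by (simp add: card_Diff_singleton)
    have wsupp: "\<forall>i\<in>I'. \<forall>S. S \<notin> A \<longrightarrow> w i S = 0"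
    proof (intro ballI allI impI)
      fix i S assume i: "i \<in> I'" and S: "S \<notin> A"
      show "w i S = 0"
      proof (cases "S = a")
        case True thus ?thesis using p by (simp add: w_def)
      next
        case False
        hence "v i S = 0" "v p S = 0" using insert.prems i p S I'_def by auto
        thus ?thesis by (simp add: w_def)
      qed
    qed
    from insert.IH[OF fI' cI' wsupp] obtain c' where
      c': "\<exists>i\<in>I'. c' i \<noteq> 0" "\<forall>S. (\<Sum>i\<in>I'. c' i * w i S) = 0" by blast
    define c where "c i = (if i = p then - (\<Sum>j\<in>I'. c' j * v j a) / v p a else c' i)" for i
    show ?thesis
    proof (intro exI conjI allI)
      show "\<exists>i\<in>I. c i \<noteq> 0" using c'(1) I'_def c_def by auto
      fix S
      have "(\<Sum>i\<in>I. c i * v i S) = c p * v p S + (\<Sum>i\<in>I'. c i * v i S)"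
        using p insert.prems I'_def by (simp add: sum.remove)
      also have "(\<Sum>i\<in>I'. c i * v i S) = (\<Sum>i\<in>I'. c' i * v i S)"
        using I'_def c_def by (intro sum.cong) auto
      also have "(\<Sum>i\<in>I'. c' i * v i S) = (\<Sum>i\<in>I'. c' i * w i S) + (\<Sum>j\<in>I'. c' j * v j a) / v p a * v p S"
        by (simp add: w_def algebra_simps sum.distrib sum_distrib_left sum_distrib_right sum_divide_distrib sum_subtractf)
      finally show "(\<Sum>i\<in>I. c i * v i S) = 0" using c'(2) by (simp add: c_def)
    qed
  qed
qed

lemma Tp_supp: "\<not> S \<subseteq> {1..int m} \<Longrightarrow> (Tp m ^^ k) (dR m) S = 0"
  by (cases k) (auto simp: Tp_def dR_def)

lemma Ti_supp: "\<not> S \<subseteq> {1..int m} \<Longrightarrow> (Ti m ^^ k) (dR m) S = 0"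
  by (cases k) (auto simp: Ti_def dR_def)

lemma Ti_lin:
  assumes "finite J"
  shows "Ti m (\<lambda>S. \<Sum>j\<in>J. c j * F j S) S' = (\<Sum>j\<in>J. c j * Ti m (F j) S')"
proof (cases "S' \<subseteq> {1..int m}")
  case True
  thus ?thesis
    by (simp add: Ti_def sum_distrib_left sum_distrib_right mult.assoc sum.swap[of _ J])
qed (simp add: Ti_def)

definition uu :: "nat \<Rightarrow> int \<Rightarrow> int set \<Rightarrow> complex" where
  "uu m n = (if n \<ge> 0 then (Tp m ^^ nat n) (dR m) else (Ti m ^^ nat (- n)) (dR m))"

lemma uu_MG: "uu m n {1..int m} = of_int (MG m n)"
proof (cases "n \<ge> 1")
  case True thus ?thesis by (simp add: uu_def MG_pos)
next
  case False
  show ?thesis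
  proof (cases "n = 0")
    case True thus ?thesis using MG_neg[of 0 m] by (simp add: uu_def)
  next
    case False
    thus ?thesis using MG_neg[of n m] \<open>\<not> n \<ge> 1\<close> by (simp add: uu_def)
  qed
qed

lemma uu_supp: "\<not> S \<subseteq> {1..int m} \<Longrightarrow> uu m n S = 0"
  by (simp add: uu_def Tp_supp Ti_supp)

lemma uu_rel: "uu m n = Ti m (uu m (n + 1))"
proof (cases "n \<ge> 0")
  case True
  have "uu m (n + 1) = Tp m ((Tp m ^^ nat n) (dR m))"
    using True by (simp add: uu_def nat_add_distrib)
  moreover have "Ti m (Tp m ((Tp m ^^ nat n) (dR m))) = (Tp m ^^ nat n) (dR m)"
    by (rule Ti_Tp) (simp add: Tp_supp)
  ultimately show ?thesis using True by (simp add: uu_def)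
next
  case False
  have "uu m (n + 1) = (Ti m ^^ nat (- (n + 1))) (dR m)"
    using False by (auto simp: uu_def)
  moreover have "nat (- n) = Suc (nat (- (n + 1)))" using False by simp
  ultimately show ?thesis using False by (simp add: uu_def)
qed

theorem mainTheorem6:
  fixes m d :: nat and b :: "nat \<Rightarrow> complex"
  assumes "m \<ge> 1"
    and "b 0 \<noteq> 0"
    and "\<forall>n::int. n \<ge> 1 \<longrightarrow> (\<Sum>k\<le>d. b k * of_int (MG m (n + int k))) = 0"
  shows "(\<forall>n::int. (\<Sum>k\<le>d. b k * of_int (MG m (n + int k))) = 0)
    \<and> (\<forall>a :: int \<Rightarrow> complex.
          (\<forall>n. n \<ge> 1 \<longrightarrow> a n = of_int (MG m n))
          \<and> (\<forall>n. (\<Sum>k\<le>d. b k * a (n + int k)) = 0)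
          \<longrightarrow> (\<forall>n. a n = of_int (MG m n)))"
proof -
  define R where "R = {1..int m}"
  define h where "h n S = (\<Sum>k\<le>d. b k * uu m (n + int k) S)" for n S
  have hMG: "h n R = (\<Sum>k\<le>d. b k * of_int (MG m (n + int k)))" for n
    unfolding h_def R_def by (simp add: uu_MG)
  have hrel: "h n = Ti m (h (n + 1))" for n
  proof
    fix S
    have "h n S = (\<Sum>k\<le>d. b k * Ti m (uu m (n + 1 + int k)) S)"
      unfolding h_def by (intro sum.cong refl) (metis uu_rel add.commute add.left_commute)
    also have "\<dots> = Ti m (h (n + 1)) S"
      unfolding h_def by (rule Ti_lin[symmetric]) simp
    finally show "h n S = Ti m (h (n + 1)) S" .
  qed
  have hsupp: "\<forall>i\<in>{1..int (card (Pow R)) + 1}. \<forall>S. S \<notin> Pow R \<longrightarrow> h i S = 0"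
    by (auto simp: h_def R_def uu_supp)
  have "card (Pow R) < card {1..int (card (Pow R)) + 1}" by simp
  from dep[OF _ _ this hsupp] obtain c where
    c: "\<exists>i\<in>{1..int (card (Pow R)) + 1}. c i \<noteq> 0"
       "\<forall>S. (\<Sum>i\<in>{1..int (card (Pow R)) + 1}. c i * h i S) = 0"
    unfolding R_def by auto
  define I where "I = {1..int (card (Pow R)) + 1}"
  have shift: "\<forall>S. (\<Sum>j\<in>I. c j * h (j - int t) S) = 0" for t
  proof (induction t)
    case 0 thus ?case using c(2) I_def by simp
  next
    case (Suc t)
    show ?case
    proof
      fix S
      have "(\<Sum>j\<in>I. c j * h (j - int (Suc t)) S) = (\<Sum>j\<in>I. c j * Ti m (h (j - int t)) S)"
        by (intro sum.cong refl) (metis hrel diff_add_cancel diff_diff_eq of_nat_Suc add.commute)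
      also have "\<dots> = Ti m (\<lambda>S. \<Sum>j\<in>I. c j * h (j - int t) S) S"
        by (rule Ti_lin[symmetric]) (simp add: I_def)
      also have "(\<lambda>S. \<Sum>j\<in>I. c j * h (j - int t) S) = (\<lambda>_. 0)" using Suc by auto
      also have "Ti m (\<lambda>_. 0) S = 0" by (simp add: Ti_def)
      finally show "(\<Sum>j\<in>I. c j * h (j - int (Suc t)) S) = 0" .
    qed
  qed
  define j0 where "j0 = Min {j\<in>I. c j \<noteq> 0}"
  have fJ: "finite {j\<in>I. c j \<noteq> 0}" "{j\<in>I. c j \<noteq> 0} \<noteq> {}"
  proof -
    have "finite I" unfolding I_def by simp
    thus "finite {j\<in>I. c j \<noteq> 0}" by simp
    show "{j\<in>I. c j \<noteq> 0} \<noteq> {}" using c(1) unfolding I_def by blast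
  qed
  have j0: "j0 \<in> I" "c j0 \<noteq> 0" using Min_in[OF fJ] j0_def by auto
  have j0min: "\<And>j. j \<in> I \<Longrightarrow> c j \<noteq> 0 \<Longrightarrow> j0 \<le> j" using fJ j0_def by simp
  have j0pos: "j0 \<ge> 1" using j0 I_def by simp
  have hyp: "\<And>n. n \<ge> 1 \<Longrightarrow> h n R = 0" using hMG assms(3) by simp
  have down: "\<forall>n. n \<ge> 1 - int t \<longrightarrow> h n R = 0" for t
  proof (induction t)
    case 0 thus ?case using hyp by simp
  next
    case (Suc t)
    show ?case
    proof (intro allI impI)
      fix n assume n: "n \<ge> 1 - int (Suc t)"
      show "h n R = 0"
      proof (cases "n \<ge> 1 - int t")
        case True thus ?thesis using Suc by simp
      next
        case False
        hence nt: "n = - int t" using n by simp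
        define s where "s = nat (j0 - n)"
        have s: "int s = j0 - n" using j0pos nt s_def by simp
        have "0 = (\<Sum>j\<in>I. c j * h (j - int s) R)" using shift[of s] by simp
        also have "\<dots> = c j0 * h n R + (\<Sum>j\<in>I - {j0}. c j * h (j - int s) R)"
          using j0 I_def s by (simp add: sum.remove)
        also have "(\<Sum>j\<in>I - {j0}. c j * h (j - int s) R) = 0"
        proof (rule sum.neutral, rule ballI)
          fix j assume j: "j \<in> I - {j0}"
          show "c j * h (j - int s) R = 0"
          proof (cases "c j = 0")
            case False
            hence "j0 < j" using j0min[of j] j by auto
            hence "j - int s \<ge> 1 - int t" using s nt by simp
            thus ?thesis using Suc by simp
          qed simp
        qed
        finally show ?thesis using j0(2) by simp
      qed
    qed
  qed
  have part1: "\<forall>n::int. (\<Sum>k\<le>d. b k * of_int (MG m (n + int k))) = 0"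
  proof
    fix n :: int
    have "h n R = 0" using down[of "nat (1 - n)"] by simp
    thus "(\<Sum>k\<le>d. b k * of_int (MG m (n + int k))) = 0" using hMG by simp
  qed
  have split: "(\<Sum>k\<le>d. f k) = f 0 + (\<Sum>k\<in>{1..d}. f k)" for f :: "nat \<Rightarrow> complex"
  proof -
    have "{..d} = insert 0 {1..d}" by auto
    thus ?thesis by simp
  qed
  have part2: "\<forall>n. a n = of_int (MG m n)"
    if a1: "\<forall>n. n \<ge> 1 \<longrightarrow> a n = of_int (MG m n)" and a2: "\<forall>n. (\<Sum>k\<le>d. b k * a (n + int k)) = 0" for a
  proof -
    have "\<forall>n. n \<ge> 1 - int t \<longrightarrow> a n = of_int (MG m n)" for t
    proof (induction t)
      case 0 thus ?case using a1 by simp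
    next
      case (Suc t)
      show ?case
      proof (intro allI impI)
        fix n assume n: "n \<ge> 1 - int (Suc t)"
        show "a n = of_int (MG m n)"
        proof (cases "n \<ge> 1 - int t")
          case True thus ?thesis using Suc by simp
        next
          case False
          hence nt: "n = - int t" using n by simp
          have eq: "(\<Sum>k\<in>{1..d}. b k * a (n + int k)) = (\<Sum>k\<in>{1..d}. b k * of_int (MG m (n + int k)))"
            using Suc nt by (intro sum.cong refl) simp
          have A: "b 0 * a n + (\<Sum>k\<in>{1..d}. b k * a (n + int k)) = 0"
            using a2 split[of "\<lambda>k. b k * a (n + int k)"] by simp
          have B: "b 0 * of_int (MG m n) + (\<Sum>k\<in>{1..d}. b k * of_int (MG m (n + int k))) = 0"
            using part1 split[of "\<lambda>k. b k * of_int (MG m (n + int k))"] by simp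
          have A': "b 0 * a n = - (\<Sum>k\<in>{1..d}. b k * a (n + int k))"
            using A by (simp only: eq_neg_iff_add_eq_0)
          have B': "b 0 * of_int (MG m n) = - (\<Sum>k\<in>{1..d}. b k * of_int (MG m (n + int k)))"
            using B by (simp only: eq_neg_iff_add_eq_0)
          have "b 0 * a n = b 0 * of_int (MG m n)" unfolding A' B' eq ..
          thus ?thesis using assms(2) by simp
        qed
      qed
    qed
    note D = this
    show ?thesis
    proof
      fix n :: int
      have "n \<ge> 1 - int (nat (1 - n))" by simp
      thus "a n = of_int (MG m n)" using D[of "nat (1 - n)"] by blast
    qed
  qed
  show ?thesis using part1 part2 by blast
qed


end
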